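(* Let $G=(V,E)$ be a finite loopless graph with $V\neq\emptyset$, with edge weights $\mathbf{v}=(v_e)_{e\in E}$, and let $q_1,q_2$ be indeterminates. Then \[ Z_G(q_2,\mathbf{v})=\sum_{\pi\in\Pi(V)}(q_2/q_1)^{\underline{|\pi|}}\prod_{B\in\pi}Z_{G[B]}(q_1,\mathbf{v}), \] equivalently \[ Z_G(q_2,\mathbf{v})=\sum_{\pi\in\Pi(V)}\Bigl(\prod_{j=0}^{|\pi|-1}(q_2-jq_1)\Bigr)\prod_{B\in\pi}\widehat{Z}_{G[B]}(q_1,\mathbf{v}), \] or \[ \widehat{Z}_G(q_2,\mathbf{v})=\sum_{\pi\in\Pi(V)}\Bigl(\prod_{j=1}^{|\pi|-1}(q_2-jq_1)\Bigr)\prod_{B\in\pi}\widehat{Z}_{G[B]}(q_1,\mathbf{v}). \]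
   Context: $Z_H(q,\mathbf{v})=\sum_{A\subseteq E(H)}q^{k(A)}\prod_{e\in A}v_e$ is the multivariate Tutte polynomial of a finite graph $H$, where $k(A)$ is the number of connected components of $(V(H),A)$, and $\widehat{Z}_H(q,\mathbf{v})=\sum_{A\subseteq E(H)}q^{k(A)-1}\prod_{e\in A}v_e$ (a polynomial, for $V(H)\ne\emptyset$). $\Pi(V)$ is the set of unordered partitions of $V$ into nonempty blocks, $|\pi|$ is the number of blocks, and $G[B]$ is the induced subgraph on $B$. For an element $r$, $r^{\underline{k}}=r(r-1)\cdots(r-k+1)$ is the falling factorial; the first identity is read in the field of rational functions in $q_1,q_2,\mathbf{v}$ (equivalently, with $q_2=rq_1$ and $r$ an indeterminate). *)

theory Defs
  imports Main "HOL-Library.Disjoint_Sets"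
begin

definition loopless_graph :: "'a set \<Rightarrow> 'e set \<Rightarrow> ('e \<Rightarrow> 'a set) \<Rightarrow> bool" where
  "loopless_graph V E ends \<longleftrightarrow> finite V \<and> finite E \<and>
     (\<forall>e\<in>E. ends e \<subseteq> V \<and> card (ends e) = 2)"

definition adj :: "('e \<Rightarrow> 'a set) \<Rightarrow> 'e set \<Rightarrow> ('a \<times> 'a) set" where
  "adj ends A = {(x, y). \<exists>e\<in>A. ends e = {x, y}}"

definition ncomp :: "'a set \<Rightarrow> ('e \<Rightarrow> 'a set) \<Rightarrow> 'e set \<Rightarrow> nat" where
  "ncomp V ends A = card (V // {(x, y). x \<in> V \<and> y \<in> V \<and> (x, y) \<in> (adj ends A)\<^sup>*})"

definition tutteZ :: "'a set \<Rightarrow> 'e set \<Rightarrow> ('e \<Rightarrow> 'a set) \<Rightarrow> 'r::comm_ring_1 \<Rightarrow> ('e \<Rightarrow> 'r) \<Rightarrow> 'r" where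
  "tutteZ V E ends q v = (\<Sum>A\<in>Pow E. q ^ ncomp V ends A * (\<Prod>e\<in>A. v e))"

text \<open>Reduced version \<open>\<widehat>Z\<close>_H(q, v) with q^(k(A)-1) (k(A) \<ge> 1 when V is nonempty).\<close>
definition tutteZhat :: "'a set \<Rightarrow> 'e set \<Rightarrow> ('e \<Rightarrow> 'a set) \<Rightarrow> 'r::comm_ring_1 \<Rightarrow> ('e \<Rightarrow> 'r) \<Rightarrow> 'r" where
  "tutteZhat V E ends q v = (\<Sum>A\<in>Pow E. q ^ (ncomp V ends A - 1) * (\<Prod>e\<in>A. v e))"

definition induced_edges :: "'e set \<Rightarrow> ('e \<Rightarrow> 'a set) \<Rightarrow> 'a set \<Rightarrow> 'e set" where
  "induced_edges E ends B = {e\<in>E. ends e \<subseteq> B}"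

definition ffall :: "'r::comm_ring_1 \<Rightarrow> nat \<Rightarrow> 'r" where
  "ffall r k = (\<Prod>j<k. r - of_nat j)"

end

theory Submission
  imports Defs
begin


lemma part_uniq:
  assumes "partition_on X P" "B \<in> P" "B' \<in> P" "x \<in> B" "x \<in> B'"
  shows "B = B'"
  using assms unfolding partition_on_def pairwise_def disjnt_def by blast

lemma refines_card_le:
  assumes "refines X Q P" "finite Q"
  shows "card P \<le> card Q"
proof -
  have PP: "partition_on X P" "partition_on X Q" and cov: "\<forall>C\<in>Q. \<exists>B\<in>P. C \<subseteq> B"
    using assms(1) unfolding refines_def by auto
  define f where "f C = (SOME B. B \<in> P \<and> C \<subseteq> B)" for C
  have "P \<subseteq> f ` Q"
  proof
    fix B assume B: "B \<in> P"
    then obtain x where x: "x \<in> B" using PP(1) unfolding partition_on_def by (metis equals0I)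
    then obtain C where C: "C \<in> Q" "x \<in> C" using B PP unfolding partition_on_def by blast
    then have ex: "\<exists>B. B \<in> P \<and> C \<subseteq> B" using cov by blast
    have fC: "f C \<in> P \<and> C \<subseteq> f C" unfolding f_def by (rule someI_ex[OF ex])
    then have "f C = B" using part_uniq[OF PP(1) _ B, of "f C" x] x C by blast
    then show "B \<in> f ` Q" using C by blast
  qed
  then have "card P \<le> card (f ` Q)" by (simp add: assms(2) card_mono)
  also have "\<dots> \<le> card Q" by (rule card_image_le[OF assms(2)])
  finally show ?thesis .
qed


lemma refines_unfold:
  "refines X Q P \<longleftrightarrow> partition_on X P \<and> partition_on X Q \<and> (\<forall>C\<in>Q. \<exists>B\<in>P. C \<subseteq> B)"
  unfolding refines_def by blast

lemma part_remove:
  assumes "partition_on X P" "B \<in> P"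
  shows "partition_on (X - B) (P - {B})"
proof -
  have eq: "P = insert B (P - {B})" using assms(2) by blast
  have dj: "disjnt B (\<Union>(P - {B}))"
    using assms unfolding partition_on_def pairwise_def disjnt_def by blast
  from assms(1) have "partition_on X (insert B (P - {B}))" using eq by simp
  then show ?thesis using partition_on_insert[OF dj] by blast
qed

lemma part_mem_sub: "partition_on X P \<Longrightarrow> B \<in> P \<Longrightarrow> B \<subseteq> X"
  unfolding partition_on_def by blast

lemma part_mem_ne: "partition_on X P \<Longrightarrow> B \<in> P \<Longrightarrow> B \<noteq> {}"
  unfolding partition_on_def by blast

lemma refines_insert:
  assumes P0: "partition_on X0 Q0" and C: "C \<noteq> {}" "C \<inter> X0 = {}"
  shows "{\<pi>. refines (X0 \<union> C) (insert C Q0) \<pi>} =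
     insert C ` {\<pi>0. refines X0 Q0 \<pi>0} \<union>
     (\<lambda>(\<pi>0,B). insert (B \<union> C) (\<pi>0 - {B})) ` (SIGMA \<pi>0:{\<pi>0. refines X0 Q0 \<pi>0}. \<pi>0)"
    (is "?L = ?R1 \<union> ?R2")
proof -
  have X0: "X0 = \<Union>Q0" using P0 unfolding partition_on_def by blast
  have PQ: "partition_on (X0 \<union> C) (insert C Q0)"
  proof -
    have dj: "disjnt C (\<Union>Q0)" using C X0 unfolding disjnt_def by blast
    have "(X0 \<union> C) - C = X0" using C by blast
    then show ?thesis using partition_on_insert[OF dj] P0 C by auto
  qed
  show ?thesis
  proof (intro equalityI subsetI)
    fix \<pi> assume "\<pi> \<in> ?L"
    then have P: "partition_on (X0 \<union> C) \<pi>" and cov: "\<forall>D\<in>insert C Q0. \<exists>B\<in>\<pi>. D \<subseteq> B"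
      unfolding refines_unfold by auto
    obtain D where D: "D \<in> \<pi>" "C \<subseteq> D" using cov by blast
    show "\<pi> \<in> ?R1 \<union> ?R2"
    proof (cases "D = C")
      case True
      define \<pi>0 where "\<pi>0 = \<pi> - {C}"
      have "partition_on ((X0 \<union> C) - C) \<pi>0" unfolding \<pi>0_def using part_remove[OF P] D True by blast
      moreover have "(X0 \<union> C) - C = X0" using C by blast
      ultimately have P0': "partition_on X0 \<pi>0" by simp
      have "\<forall>E\<in>Q0. \<exists>B\<in>\<pi>0. E \<subseteq> B"
      proof
        fix E assume E: "E \<in> Q0"
        then obtain B where B: "B \<in> \<pi>" "E \<subseteq> B" using cov by blast
        have "E \<noteq> {}" "E \<subseteq> X0" using part_mem_ne[OF P0 E] part_mem_sub[OF P0 E] by auto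
        then have "B \<noteq> C" using B C by blast
        then show "\<exists>B\<in>\<pi>0. E \<subseteq> B" using B unfolding \<pi>0_def by blast
      qed
      then have "refines X0 Q0 \<pi>0" using P0' P0 unfolding refines_unfold by blast
      moreover have "\<pi> = insert C \<pi>0" unfolding \<pi>0_def using D True by blast
      ultimately show ?thesis by blast
    next
      case False
      define B where "B = D - C"
      define \<pi>0 where "\<pi>0 = insert B (\<pi> - {D})"
      have DX: "D \<subseteq> X0 \<union> C" using part_mem_sub[OF P D(1)] .
      have Bne: "B \<noteq> {}" unfolding B_def using False D(2) by blast
      have BX: "B \<subseteq> X0" unfolding B_def using DX by blast
      have Prem: "partition_on ((X0 \<union> C) - D) (\<pi> - {D})" using part_remove[OF P D(1)] .
      have eqX: "(X0 \<union> C) - D = X0 - B" unfolding B_def using D(2) C by blast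
      have djD: "\<And>D'. D' \<in> \<pi> - {D} \<Longrightarrow> D' \<inter> D = {}"
        using P D(1) unfolding partition_on_def pairwise_def disjnt_def by blast
      have djB: "disjnt B (\<Union>(\<pi> - {D}))" using djD unfolding B_def disjnt_def by blast
      have P0': "partition_on X0 \<pi>0"
        unfolding \<pi>0_def using partition_on_insert[OF djB, of X0] Prem eqX BX Bne by simp
      have Bnot: "B \<notin> \<pi> - {D}" using djD Bne unfolding B_def by blast
      have "\<forall>E\<in>Q0. \<exists>B'\<in>\<pi>0. E \<subseteq> B'"
      proof
        fix E assume E: "E \<in> Q0"
        then obtain B' where B': "B' \<in> \<pi>" "E \<subseteq> B'" using cov by blast
        have "E \<subseteq> X0" using part_mem_sub[OF P0 E] by auto
        show "\<exists>B'\<in>\<pi>0. E \<subseteq> B'"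
        proof (cases "B' = D")
          case True
          then have "E \<subseteq> B" unfolding B_def using B' \<open>E \<subseteq> X0\<close> C by blast
          then show ?thesis unfolding \<pi>0_def by blast
        next
          case False
          then show ?thesis using B' unfolding \<pi>0_def by blast
        qed
      qed
      then have R: "refines X0 Q0 \<pi>0" using P0' P0 unfolding refines_unfold by blast
      have "B \<union> C = D" unfolding B_def using D(2) by blast
      moreover have "\<pi>0 - {B} = \<pi> - {D}" unfolding \<pi>0_def using Bnot by blast
      ultimately have "\<pi> = insert (B \<union> C) (\<pi>0 - {B})" using D(1) by blast
      moreover have "B \<in> \<pi>0" unfolding \<pi>0_def by blast
      ultimately have "\<pi> \<in> ?R2" using R by force
      then show ?thesis by blast
    qed
  next
    fix \<pi> assume "\<pi> \<in> ?R1 \<union> ?R2"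
    then show "\<pi> \<in> ?L"
    proof
      assume "\<pi> \<in> ?R1"
      then obtain \<pi>0 where R: "refines X0 Q0 \<pi>0" and pi: "\<pi> = insert C \<pi>0" by blast
      have P: "partition_on X0 \<pi>0" and cov: "\<forall>D\<in>Q0. \<exists>B\<in>\<pi>0. D \<subseteq> B" using R unfolding refines_unfold by auto
      have "\<Union>\<pi>0 = X0" using P unfolding partition_on_def by blast
      then have dj: "disjnt C (\<Union>\<pi>0)" using C unfolding disjnt_def by simp
      have eq: "(X0 \<union> C) - C = X0" using C by blast
      have "partition_on (X0 \<union> C) (insert C \<pi>0) \<longleftrightarrow> partition_on ((X0 \<union> C) - C) \<pi>0 \<and> C \<subseteq> X0 \<union> C \<and> C \<noteq> {}"
        by (rule partition_on_insert[OF dj])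
      then have P': "partition_on (X0 \<union> C) \<pi>" unfolding pi eq using P C by simp
      have cov': "\<forall>D\<in>insert C Q0. \<exists>B'\<in>\<pi>. D \<subseteq> B'"
      proof
        fix D assume "D \<in> insert C Q0"
        then show "\<exists>B'\<in>\<pi>. D \<subseteq> B'"
        proof
          assume "D = C" then show ?thesis unfolding pi by blast
        next
          assume "D \<in> Q0"
          then obtain B' where "B' \<in> \<pi>0" "D \<subseteq> B'" using cov by blast
          then show ?thesis unfolding pi by blast
        qed
      qed
      have "refines (X0 \<union> C) (insert C Q0) \<pi>" unfolding refines_unfold using P' PQ cov' by blast
      then show ?thesis by simp
    next
      assume "\<pi> \<in> ?R2"
      then obtain p where p: "p \<in> (SIGMA \<pi>0:{\<pi>0. refines X0 Q0 \<pi>0}. \<pi>0)" and pp: "\<pi> = (\<lambda>(\<pi>0,B). insert (B \<union> C) (\<pi>0 - {B})) p"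
        by (rule imageE)
      obtain \<pi>0 B where p2: "p = (\<pi>0, B)" by (cases p)
      have R: "refines X0 Q0 \<pi>0" and B: "B \<in> \<pi>0" using p unfolding p2 by auto
      have pi: "\<pi> = insert (B \<union> C) (\<pi>0 - {B})" using pp unfolding p2 by simp
      have P: "partition_on X0 \<pi>0" and cov: "\<forall>D\<in>Q0. \<exists>B\<in>\<pi>0. D \<subseteq> B" using R unfolding refines_unfold by auto
      have Prem: "partition_on (X0 - B) (\<pi>0 - {B})" using part_remove[OF P B] .
      have "\<Union>(\<pi>0 - {B}) = X0 - B" using Prem unfolding partition_on_def by blast
      then have dj: "disjnt (B \<union> C) (\<Union>(\<pi>0 - {B}))"
        using C unfolding disjnt_def by blast
      have eqX: "(X0 \<union> C) - (B \<union> C) = X0 - B" using C by blast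
      have BX: "B \<subseteq> X0" using part_mem_sub[OF P B] .
      have "partition_on (X0 \<union> C) (insert (B \<union> C) (\<pi>0 - {B})) \<longleftrightarrow> partition_on ((X0 \<union> C) - (B \<union> C)) (\<pi>0 - {B}) \<and> B \<union> C \<subseteq> X0 \<union> C \<and> B \<union> C \<noteq> {}"
        by (rule partition_on_insert[OF dj])
      moreover have "B \<union> C \<subseteq> X0 \<union> C" "B \<union> C \<noteq> {}" using BX C by auto
      ultimately have P': "partition_on (X0 \<union> C) \<pi>" unfolding pi eqX using Prem by blast
      have cov': "\<forall>D\<in>insert C Q0. \<exists>B'\<in>\<pi>. D \<subseteq> B'"
      proof
        fix D assume "D \<in> insert C Q0"
        then show "\<exists>B'\<in>\<pi>. D \<subseteq> B'"
        proof
          assume "D = C" then show ?thesis unfolding pi by blast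
        next
          assume "D \<in> Q0"
          then obtain B' where B': "B' \<in> \<pi>0" "D \<subseteq> B'" using cov by blast
          show ?thesis
          proof (cases "B' = B")
            case True
            have "B \<union> C \<in> \<pi>" unfolding pi by simp
            moreover have "D \<subseteq> B \<union> C" using B' True by blast
            ultimately show ?thesis by blast
          next
            case False
            then have "B' \<in> \<pi>" unfolding pi using B' by simp
            then show ?thesis using B' by blast
          qed
        qed
      qed
      have "refines (X0 \<union> C) (insert C Q0) \<pi>" unfolding refines_unfold using P' PQ cov' by blast
      then show ?thesis by simp
    qed
  qed
qed



lemma gen_step:
  fixes h :: "nat \<Rightarrow> 'r::comm_ring_1" and q1 :: 'r
  assumes fin: "finite X0" and P0: "partition_on X0 Q0" and C: "C \<noteq> {}" "C \<inter> X0 = {}"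
  shows "(\<Sum>\<pi>\<in>{\<pi>. refines (X0 \<union> C) (insert C Q0) \<pi>}. h (card \<pi>) * q1 ^ (Suc (card Q0) - card \<pi>)) =
         (\<Sum>\<pi>0\<in>{\<pi>0. refines X0 Q0 \<pi>0}. h (Suc (card \<pi>0)) * q1 ^ (card Q0 - card \<pi>0)
              + of_nat (card \<pi>0) * (h (card \<pi>0) * q1 ^ (Suc (card Q0) - card \<pi>0)))"
proof -
  define R0 where "R0 = {\<pi>0. refines X0 Q0 \<pi>0}"
  define f2 where "f2 = (\<lambda>(\<pi>0::'a set set,B). insert (B \<union> C) (\<pi>0 - {B}))"
  define F where "F \<pi> = h (card \<pi>) * q1 ^ (Suc (card Q0) - card \<pi>)" for \<pi> :: "'a set set"
  have finR0: "finite R0"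
    by (rule finite_subset[OF _ finitely_many_partition_on[OF fin]]) (auto simp: R0_def refines_unfold)
  have finpi: "finite \<pi>0" if "\<pi>0 \<in> R0" for \<pi>0
    using that fin finite_elements unfolding R0_def refines_unfold by blast
  have sub: "B \<subseteq> X0" if "\<pi>0 \<in> R0" "B \<in> \<pi>0" for \<pi>0 B
    using that part_mem_sub unfolding R0_def refines_unfold by blast
  have Cnot: "C \<notin> \<pi>0" if "\<pi>0 \<in> R0" for \<pi>0
    using sub[OF that] C by blast
  have BCnot: "B' \<union> C \<notin> \<pi>0 - {B}" if "\<pi>0 \<in> R0" for \<pi>0 B B'
    using sub[OF that] C by blast
  have ne: "B \<noteq> {}" if "\<pi>0 \<in> R0" "B \<in> \<pi>0" for \<pi>0 B
    using that part_mem_ne unfolding R0_def refines_unfold by blast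
  have inj1: "inj_on (insert C) R0"
  proof (rule inj_onI)
    fix a b assume a: "a \<in> R0" and b: "b \<in> R0" and e: "insert C a = insert C b"
    show "a = b" using e insert_ident[OF Cnot[OF a] Cnot[OF b]] by blast
  qed
  have inj2: "inj_on f2 (SIGMA \<pi>0:R0. \<pi>0)"
  proof (rule inj_onI)
    fix x y assume x: "x \<in> (SIGMA \<pi>0:R0. \<pi>0)" and y: "y \<in> (SIGMA \<pi>0:R0. \<pi>0)" and e: "f2 x = f2 y"
    obtain a B where xa: "x = (a, B)" by (cases x)
    obtain b B' where yb: "y = (b, B')" by (cases y)
    have a: "a \<in> R0" "B \<in> a" using x unfolding xa by simp_all
    have b: "b \<in> R0" "B' \<in> b" using y unfolding yb by simp_all
    have e': "insert (B \<union> C) (a - {B}) = insert (B' \<union> C) (b - {B'})" using e unfolding xa yb f2_def by simp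
    have n: "B \<union> C \<notin> b - {B'}" using BCnot[OF b(1)] .
    have "B \<union> C \<in> insert (B' \<union> C) (b - {B'})" using e' by (metis insertI1)
    then have BC: "B \<union> C = B' \<union> C" using n by blast
    have s1: "B \<subseteq> X0" using sub[OF a(1) a(2)] .
    have s2: "B' \<subseteq> X0" using sub[OF b(1) b(2)] .
    have "B = (B \<union> C) \<inter> X0" using s1 C(2) by blast
    also have "\<dots> = (B' \<union> C) \<inter> X0" using BC by simp
    also have "\<dots> = B'" using s2 C(2) by blast
    finally have BB: "B = B'" .
    have "insert (B \<union> C) (a - {B}) = insert (B \<union> C) (b - {B})" using e' BB by simp
    then have ab: "a - {B} = b - {B}" using insert_ident[OF BCnot[OF a(1)] BCnot[OF b(1)]] by simp
    have "a = insert B (a - {B})" using a(2) by (simp add: insert_absorb)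
    also have "\<dots> = insert B (b - {B})" using ab by simp
    also have "\<dots> = b" using b(2) BB by (simp add: insert_absorb)
    finally show "x = y" using xa yb BB by simp
  qed
  have disj: "insert C ` R0 \<inter> f2 ` (SIGMA \<pi>0:R0. \<pi>0) = {}"
  proof (rule ccontr)
    assume "insert C ` R0 \<inter> f2 ` (SIGMA \<pi>0:R0. \<pi>0) \<noteq> {}"
    then obtain z where z1: "z \<in> insert C ` R0" and z2: "z \<in> f2 ` (SIGMA \<pi>0:R0. \<pi>0)" by blast
    from z1 obtain a where a: "a \<in> R0" and za: "z = insert C a" by (rule imageE)
    from z2 obtain p where p: "p \<in> (SIGMA \<pi>0:R0. \<pi>0)" and zp: "z = f2 p" by (rule imageE)
    obtain b B where pb: "p = (b, B)" by (cases p)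
    have b: "b \<in> R0" "B \<in> b" using p unfolding pb by simp_all
    have e: "insert C a = insert (B \<union> C) (b - {B})" using za zp unfolding pb f2_def by simp
    have "C \<in> insert (B \<union> C) (b - {B})" using e by (metis insertI1)
    moreover have "C \<noteq> B \<union> C" using sub[OF b] ne[OF b] C by blast
    moreover have "C \<notin> b" using Cnot[OF b(1)] .
    ultimately show False by blast
  qed
  have L: "{\<pi>. refines (X0 \<union> C) (insert C Q0) \<pi>} = insert C ` R0 \<union> f2 ` (SIGMA \<pi>0:R0. \<pi>0)"
    unfolding R0_def f2_def by (rule refines_insert[OF P0 C])
  have finS: "finite (SIGMA \<pi>0:R0. \<pi>0)" by (rule finite_SigmaI[OF finR0 finpi])
  have "(\<Sum>\<pi>\<in>{\<pi>. refines (X0 \<union> C) (insert C Q0) \<pi>}. F \<pi>) =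
        (\<Sum>\<pi>\<in>insert C ` R0. F \<pi>) + (\<Sum>\<pi>\<in>f2 ` (SIGMA \<pi>0:R0. \<pi>0). F \<pi>)"
    unfolding L by (rule sum.union_disjoint[OF finite_imageI[OF finR0] finite_imageI[OF finS] disj])
  also have "(\<Sum>\<pi>\<in>insert C ` R0. F \<pi>) = (\<Sum>\<pi>0\<in>R0. F (insert C \<pi>0))"
    using sum.reindex[OF inj1, of F] unfolding comp_def .
  also have "(\<Sum>\<pi>\<in>f2 ` (SIGMA \<pi>0:R0. \<pi>0). F \<pi>) = (\<Sum>x\<in>(SIGMA \<pi>0:R0. \<pi>0). F (f2 x))"
    using sum.reindex[OF inj2, of F] unfolding comp_def .
  also have "\<dots> = (\<Sum>\<pi>0\<in>R0. \<Sum>B\<in>\<pi>0. F (f2 (\<pi>0, B)))"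
  proof -
    have "(\<Sum>\<pi>0\<in>R0. \<Sum>B\<in>\<pi>0. F (f2 (\<pi>0, B))) = (\<Sum>(\<pi>0,B)\<in>(SIGMA \<pi>0:R0. \<pi>0). F (f2 (\<pi>0,B)))"
      by (rule sum.Sigma) (use finR0 finpi in auto)
    then show ?thesis by (simp add: case_prod_beta')
  qed
  also have "\<dots> = (\<Sum>\<pi>0\<in>R0. of_nat (card \<pi>0) * (h (card \<pi>0) * q1 ^ (Suc (card Q0) - card \<pi>0)))"
  proof (rule sum.cong[OF refl])
    fix \<pi>0 assume p: "\<pi>0 \<in> R0"
    have cd: "card (f2 (\<pi>0, B)) = card \<pi>0" if B: "B \<in> \<pi>0" for B
    proof -
      have "f2 (\<pi>0, B) = insert (B \<union> C) (\<pi>0 - {B})" by (simp add: f2_def)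
      then have "card (f2 (\<pi>0, B)) = Suc (card (\<pi>0 - {B}))"
        using card_insert_disjoint[OF finite_Diff[OF finpi[OF p]] BCnot[OF p]] by simp
      also have "\<dots> = card \<pi>0" using card_Suc_Diff1[OF finpi[OF p] B] .
      finally show ?thesis .
    qed
    have "(\<Sum>B\<in>\<pi>0. F (f2 (\<pi>0, B))) = (\<Sum>B\<in>\<pi>0. h (card \<pi>0) * q1 ^ (Suc (card Q0) - card \<pi>0))"
      by (rule sum.cong[OF refl]) (simp only: F_def cd)
    also have "\<dots> = of_nat (card \<pi>0) * (h (card \<pi>0) * q1 ^ (Suc (card Q0) - card \<pi>0))"
      by (rule sum_constant)
    finally show "(\<Sum>B\<in>\<pi>0. F (f2 (\<pi>0, B))) = of_nat (card \<pi>0) * (h (card \<pi>0) * q1 ^ (Suc (card Q0) - card \<pi>0))" .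
  qed
  also have "(\<Sum>\<pi>0\<in>R0. F (insert C \<pi>0)) = (\<Sum>\<pi>0\<in>R0. h (Suc (card \<pi>0)) * q1 ^ (card Q0 - card \<pi>0))"
  proof (rule sum.cong[OF refl])
    fix \<pi>0 assume p: "\<pi>0 \<in> R0"
    have "card (insert C \<pi>0) = Suc (card \<pi>0)" by (rule card_insert_disjoint[OF finpi[OF p] Cnot[OF p]])
    then show "F (insert C \<pi>0) = h (Suc (card \<pi>0)) * q1 ^ (card Q0 - card \<pi>0)" by (simp only: F_def diff_Suc_Suc)
  qed
  finally have "(\<Sum>\<pi>\<in>{\<pi>. refines (X0 \<union> C) (insert C Q0) \<pi>}. F \<pi>) =
     (\<Sum>\<pi>0\<in>R0. h (Suc (card \<pi>0)) * q1 ^ (card Q0 - card \<pi>0)) +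
     (\<Sum>\<pi>0\<in>R0. of_nat (card \<pi>0) * (h (card \<pi>0) * q1 ^ (Suc (card Q0) - card \<pi>0)))" .
  then show ?thesis unfolding F_def R0_def sum.distrib[symmetric] .
qed



lemma refines_empty: "{\<pi>. refines {} {} \<pi>} = {{}}"
  unfolding refines_unfold partition_on_empty by auto

lemma term_eq:
  fixes h :: "nat \<Rightarrow> 'r::comm_ring_1"
  assumes "n \<le> m" "h (Suc n) = h n * (q2 - of_nat n * q1)"
  shows "h (Suc n) * q1 ^ (m - n) + of_nat n * (h n * q1 ^ (Suc m - n)) = q2 * (h n * q1 ^ (m - n))"
proof -
  have "Suc m - n = Suc (m - n)" using assms(1) by (rule Suc_diff_le)
  then have "q1 ^ (Suc m - n) = q1 * q1 ^ (m - n)" by simp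
  then show ?thesis unfolding assms(2) by (simp add: algebra_simps)
qed

lemma gen_main:
  fixes h :: "nat \<Rightarrow> 'r::comm_ring_1" and q1 q2 c :: 'r
  assumes "finite Q" "Q \<noteq> {}" "\<forall>C\<in>Q. finite C" "partition_on (\<Union>Q) Q"
    and hrec: "\<And>n. 1 \<le> n \<Longrightarrow> h (Suc n) = h n * (q2 - of_nat n * q1)" and h1: "h 1 = c"
  shows "(\<Sum>\<pi>\<in>{\<pi>. refines (\<Union>Q) Q \<pi>}. h (card \<pi>) * q1 ^ (card Q - card \<pi>)) = c * q2 ^ (card Q - 1)"
  using assms(1,2,3,4)
proof (induction Q rule: finite_ne_induct)
  case (singleton C)
  have C: "C \<noteq> {}" using singleton.prems partition_onD3 by fastforce
  have "(\<Sum>\<pi>\<in>{\<pi>. refines C {C} \<pi>}. h (card \<pi>) * q1 ^ (Suc 0 - card \<pi>)) = h 1"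
    using gen_step[of "{}" "{}" C h q1] C by (simp add: partition_on_empty refines_empty)
  then show ?case using h1 by simp
next
  case (insert C Q0)
  define X0 where "X0 = \<Union>Q0"
  have P: "partition_on (\<Union>(insert C Q0)) (insert C Q0)" using insert.prems(2) .
  have C: "C \<noteq> {}" using partition_onD3[OF P] by blast
  have dj: "C \<inter> X0 = {}"
  proof -
    have "\<And>D. D \<in> Q0 \<Longrightarrow> C \<inter> D = {}"
    proof -
      fix D assume D: "D \<in> Q0"
      then have "D \<noteq> C" using insert.hyps(3) by blast
      moreover have "C \<in> insert C Q0" "D \<in> insert C Q0" using D by simp_all
      ultimately have "disjnt C D" using partition_onD2[OF P] unfolding pairwise_def by metis
      then show "C \<inter> D = {}" unfolding disjnt_def .
    qed
    then show ?thesis unfolding X0_def by blast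
  qed
  have P0: "partition_on X0 Q0"
  proof -
    have "partition_on (\<Union>(insert C Q0) - C) (insert C Q0 - {C})" by (rule part_remove[OF P]) simp
    moreover have e1: "insert C Q0 - {C} = Q0" using insert.hyps(3) by blast
    moreover have e2: "\<Union>(insert C Q0) - C = X0" unfolding X0_def using dj X0_def by blast
    ultimately show ?thesis by metis
  qed
  have fin0: "\<forall>D\<in>Q0. finite D" using insert.prems(1) by blast
  have finX0: "finite X0" unfolding X0_def using finite_Union[OF insert.hyps(1)] fin0 by blast
  have X0ne: "X0 \<noteq> {}"
  proof -
    obtain D where D: "D \<in> Q0" using insert.hyps(2) by blast
    have "D \<noteq> {}" using partition_onD3[OF P] D by blast
    then show ?thesis unfolding X0_def using D by blast
  qed
  have U: "\<Union>(insert C Q0) = X0 \<union> C" unfolding X0_def by blast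
  have cardQ: "card (insert C Q0) = Suc (card Q0)" using insert.hyps(1,3) by simp
  have IH: "(\<Sum>\<pi>\<in>{\<pi>. refines X0 Q0 \<pi>}. h (card \<pi>) * q1 ^ (card Q0 - card \<pi>)) = c * q2 ^ (card Q0 - 1)"
    using insert.IH[OF fin0] P0 unfolding X0_def by blast
  have "(\<Sum>\<pi>\<in>{\<pi>. refines (\<Union>(insert C Q0)) (insert C Q0) \<pi>}. h (card \<pi>) * q1 ^ (card (insert C Q0) - card \<pi>))
      = (\<Sum>\<pi>\<in>{\<pi>. refines (X0 \<union> C) (insert C Q0) \<pi>}. h (card \<pi>) * q1 ^ (Suc (card Q0) - card \<pi>))"
    unfolding U cardQ ..
  also have "\<dots> = (\<Sum>\<pi>0\<in>{\<pi>0. refines X0 Q0 \<pi>0}. h (Suc (card \<pi>0)) * q1 ^ (card Q0 - card \<pi>0)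
              + of_nat (card \<pi>0) * (h (card \<pi>0) * q1 ^ (Suc (card Q0) - card \<pi>0)))"
    by (rule gen_step[OF finX0 P0 C dj])
  also have "\<dots> = (\<Sum>\<pi>0\<in>{\<pi>0. refines X0 Q0 \<pi>0}. q2 * (h (card \<pi>0) * q1 ^ (card Q0 - card \<pi>0)))"
  proof (rule sum.cong[OF refl])
    fix \<pi>0 assume "\<pi>0 \<in> {\<pi>0. refines X0 Q0 \<pi>0}"
    then have R: "refines X0 Q0 \<pi>0" by simp
    have le: "card \<pi>0 \<le> card Q0" using refines_card_le[OF R] insert.hyps by blast
    have Pp: "partition_on X0 \<pi>0" using R unfolding refines_unfold by blast
    have "\<pi>0 \<noteq> {}" using Pp X0ne partition_onD1 by fastforce
    moreover have "finite \<pi>0" using finite_elements[OF finX0 Pp] .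
    ultimately have "1 \<le> card \<pi>0" by (simp add: Suc_le_eq card_gt_0_iff)
    then show "h (Suc (card \<pi>0)) * q1 ^ (card Q0 - card \<pi>0)
              + of_nat (card \<pi>0) * (h (card \<pi>0) * q1 ^ (Suc (card Q0) - card \<pi>0)) = q2 * (h (card \<pi>0) * q1 ^ (card Q0 - card \<pi>0))"
      using term_eq[OF le hrec] by blast
  qed
  also have "\<dots> = q2 * (c * q2 ^ (card Q0 - 1))" unfolding sum_distrib_left[symmetric] IH ..
  also have "\<dots> = c * q2 ^ (card (insert C Q0) - 1)"
  proof -
    have "card Q0 \<ge> 1" using insert.hyps by (simp add: Suc_le_eq card_gt_0_iff)
    then have "card (insert C Q0) - 1 = Suc (card Q0 - 1)" unfolding cardQ by simp
    then show ?thesis by (simp add: algebra_simps)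
  qed
  finally show ?case .
qed

lemma gen_ff:
  fixes q1 q2 :: "'r::comm_ring_1"
  assumes "finite Q" "Q \<noteq> {}" "\<forall>C\<in>Q. finite C" "partition_on (\<Union>Q) Q"
  shows "(\<Sum>\<pi>\<in>{\<pi>. refines (\<Union>Q) Q \<pi>}. (\<Prod>j<card \<pi>. q2 - of_nat j * q1) * q1 ^ (card Q - card \<pi>)) = q2 ^ card Q"
proof -
  have "(\<Sum>\<pi>\<in>{\<pi>. refines (\<Union>Q) Q \<pi>}. (\<Prod>j<card \<pi>. q2 - of_nat j * q1) * q1 ^ (card Q - card \<pi>)) = q2 * q2 ^ (card Q - 1)"
    by (rule gen_main[OF assms, where h = "\<lambda>n. \<Prod>j<n. q2 - of_nat j * q1"]) simp_all
  moreover have "card Q \<ge> 1" using assms(1,2) by (simp add: Suc_le_eq card_gt_0_iff)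
  ultimately show ?thesis by (metis Suc_diff_le diff_Suc_1 power_Suc)
qed

lemma gen_g:
  fixes q1 q2 :: "'r::comm_ring_1"
  assumes "finite Q" "Q \<noteq> {}" "\<forall>C\<in>Q. finite C" "partition_on (\<Union>Q) Q"
  shows "(\<Sum>\<pi>\<in>{\<pi>. refines (\<Union>Q) Q \<pi>}. (\<Prod>j\<in>{1..<card \<pi>}. q2 - of_nat j * q1) * q1 ^ (card Q - card \<pi>)) = q2 ^ (card Q - 1)"
proof -
  have "(\<Sum>\<pi>\<in>{\<pi>. refines (\<Union>Q) Q \<pi>}. (\<Prod>j\<in>{1..<card \<pi>}. q2 - of_nat j * q1) * q1 ^ (card Q - card \<pi>)) = 1 * q2 ^ (card Q - 1)"
    by (rule gen_main[OF assms, where h = "\<lambda>n. \<Prod>j\<in>{1..<n}. q2 - of_nat j * q1"]) (simp_all add: prod.atLeastLessThan_Suc)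
  then show ?thesis by simp
qed



lemma prod_sum_Pow:
  fixes F :: "'i \<Rightarrow> 'e set \<Rightarrow> 'r::comm_ring_1"
  assumes "finite I" "\<forall>i\<in>I. finite (S i)" "\<forall>i\<in>I. \<forall>j\<in>I. i \<noteq> j \<longrightarrow> S i \<inter> S j = {}"
  shows "(\<Prod>i\<in>I. \<Sum>X\<in>Pow (S i). F i X) = (\<Sum>A\<in>Pow (\<Union>i\<in>I. S i). \<Prod>i\<in>I. F i (A \<inter> S i))"
  using assms
proof (induction I rule: finite_induct)
  case empty
  then show ?case by simp
next
  case (insert i I)
  define U where "U = (\<Union>j\<in>I. S j)"
  have dj: "S i \<inter> S j = {}" if j: "j \<in> I" for j
  proof -
    have "i \<noteq> j" using j insert.hyps(2) by blast
    then show ?thesis using insert.prems(2)[rule_format, of i j] j by simp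
  qed
  have dU: "S i \<inter> U = {}" unfolding U_def using dj by blast
  have finSi: "finite (S i)" using insert.prems(1) by blast
  have finU: "finite U" unfolding U_def using insert.prems(1) insert.hyps(1) by blast
  have IH: "(\<Prod>j\<in>I. \<Sum>X\<in>Pow (S j). F j X) = (\<Sum>A\<in>Pow U. \<Prod>j\<in>I. F j (A \<inter> S j))"
    unfolding U_def using insert.IH insert.prems by blast
  have "(\<Prod>j\<in>insert i I. \<Sum>X\<in>Pow (S j). F j X) = (\<Sum>X\<in>Pow (S i). F i X) * (\<Prod>j\<in>I. \<Sum>X\<in>Pow (S j). F j X)"
    using insert.hyps by simp
  also have "\<dots> = (\<Sum>X\<in>Pow (S i). F i X) * (\<Sum>A\<in>Pow U. \<Prod>j\<in>I. F j (A \<inter> S j))" unfolding IH ..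
  also have "\<dots> = (\<Sum>p\<in>Pow (S i) \<times> Pow U. F i (fst p) * (\<Prod>j\<in>I. F j (snd p \<inter> S j)))"
    unfolding sum_product sum.cartesian_product by (simp add: case_prod_beta)
  also have "\<dots> = (\<Sum>A\<in>Pow (S i \<union> U). F i (A \<inter> S i) * (\<Prod>j\<in>I. F j (A \<inter> S j)))"
  proof (rule sum.reindex_bij_witness[where i = "\<lambda>A. (A \<inter> S i, A \<inter> U)" and j = "\<lambda>p. fst p \<union> snd p"])
    fix p assume p: "p \<in> Pow (S i) \<times> Pow U"
    then have p1: "fst p \<subseteq> S i" and p2: "snd p \<subseteq> U" by auto
    show "((fst p \<union> snd p) \<inter> S i, (fst p \<union> snd p) \<inter> U) = p"
    proof -
      have "(fst p \<union> snd p) \<inter> S i = fst p" using p1 p2 dU by blast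
      moreover have "(fst p \<union> snd p) \<inter> U = snd p" using p1 p2 dU by blast
      ultimately show ?thesis by simp
    qed
    show "fst p \<union> snd p \<in> Pow (S i \<union> U)" using p1 p2 by blast
    have "(fst p \<union> snd p) \<inter> S i = fst p" using p1 p2 dU by blast
    moreover have "\<And>j. j \<in> I \<Longrightarrow> (fst p \<union> snd p) \<inter> S j = snd p \<inter> S j" using p1 dj by blast
    ultimately show "F i ((fst p \<union> snd p) \<inter> S i) * (\<Prod>j\<in>I. F j ((fst p \<union> snd p) \<inter> S j)) =
          F i (fst p) * (\<Prod>j\<in>I. F j (snd p \<inter> S j))"
      by (metis (no_types, lifting) prod.cong)
  next
    fix A assume A: "A \<in> Pow (S i \<union> U)"
    show "fst (A \<inter> S i, A \<inter> U) \<union> snd (A \<inter> S i, A \<inter> U) = A" using A by auto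
    show "(A \<inter> S i, A \<inter> U) \<in> Pow (S i) \<times> Pow U" by auto
  qed
  also have "\<dots> = (\<Sum>A\<in>Pow (\<Union>j\<in>insert i I. S j). \<Prod>j\<in>insert i I. F j (A \<inter> S j))"
  proof -
    have "(\<Union>j\<in>insert i I. S j) = S i \<union> U" unfolding U_def by blast
    moreover have "\<And>A. (\<Prod>j\<in>insert i I. F j (A \<inter> S j)) = F i (A \<inter> S i) * (\<Prod>j\<in>I. F j (A \<inter> S j))"
      using insert.hyps by simp
    ultimately show ?thesis by simp
  qed
  finally show ?case .
qed



definition cr :: "'a set \<Rightarrow> ('e \<Rightarrow> 'a set) \<Rightarrow> 'e set \<Rightarrow> ('a \<times> 'a) set" where
  "cr V ends A = {(x, y). x \<in> V \<and> y \<in> V \<and> (x, y) \<in> (adj ends A)\<^sup>*}"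

lemma ncomp_cr: "ncomp V ends A = card (V // cr V ends A)"
  unfolding ncomp_def cr_def ..

lemma sym_adj: "sym (adj ends A)"
  unfolding adj_def sym_def by (auto simp: insert_commute)

lemma adj_mono: "A \<subseteq> A' \<Longrightarrow> adj ends A \<subseteq> adj ends A'"
  unfolding adj_def by blast

lemma equiv_cr: "equiv V (cr V ends A)"
proof (rule equivI)
  show "cr V ends A \<subseteq> V \<times> V" unfolding cr_def by blast
  show "refl_on V (cr V ends A)" unfolding refl_on_def cr_def by simp
  have s: "sym ((adj ends A)\<^sup>*)" by (rule sym_rtrancl[OF sym_adj])
  show "sym (cr V ends A)" using s unfolding sym_def cr_def by blast
  show "trans (cr V ends A)" unfolding trans_def cr_def using rtrancl_trans by fast
qed

lemma cr_sub: "cr V ends A \<subseteq> V \<times> V" unfolding cr_def by blast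

lemma finite_cr_quot: "finite V \<Longrightarrow> finite (V // cr V ends A)"
  by (rule finite_quotient[OF _ cr_sub])

lemma ncomp_pos: "finite B \<Longrightarrow> B \<noteq> {} \<Longrightarrow> 1 \<le> ncomp B ends A"
  unfolding ncomp_cr using finite_cr_quot[of B ends A]
  by (metis One_nat_def Suc_leI card_gt_0_iff quotient_is_empty)

lemma path_local:
  assumes P: "partition_on V P" and cov: "\<forall>e\<in>A. \<exists>B\<in>P. ends e \<subseteq> B" and B: "B \<in> P" and AE: "A \<subseteq> E"
    and path: "(x, y) \<in> (adj ends A)\<^sup>*" and x: "x \<in> B"
  shows "y \<in> B \<and> (x, y) \<in> (adj ends (A \<inter> induced_edges E ends B))\<^sup>*"
  using path
proof (induction rule: rtrancl_induct)
  case base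
  then show ?case using x by simp
next
  case (step y z)
  then have yB: "y \<in> B" and p: "(x, y) \<in> (adj ends (A \<inter> induced_edges E ends B))\<^sup>*" by auto
  from step.hyps(2) obtain e where e: "e \<in> A" "ends e = {y, z}" unfolding adj_def by blast
  from cov e(1) obtain B' where B': "B' \<in> P" "ends e \<subseteq> B'" by blast
  have "y \<in> B'" using B'(2) e(2) by blast
  then have "B' = B" using part_uniq[OF P B'(1) B] yB by blast
  then have eB: "ends e \<subseteq> B" using B' by blast
  then have zB: "z \<in> B" using e(2) by blast
  have "e \<in> A \<inter> induced_edges E ends B" using e(1) AE eB unfolding induced_edges_def by blast
  then have "(y, z) \<in> adj ends (A \<inter> induced_edges E ends B)" using e(2) unfolding adj_def by blast
  then have "(x, z) \<in> (adj ends (A \<inter> induced_edges E ends B))\<^sup>*" using p by (rule rtrancl_into_rtrancl[rotated])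
  then show ?case using zB by blast
qed

lemma class_local:
  assumes P: "partition_on V P" and cov: "\<forall>e\<in>A. \<exists>B\<in>P. ends e \<subseteq> B" and B: "B \<in> P" and AE: "A \<subseteq> E"
    and x: "x \<in> B"
  shows "cr V ends A `` {x} = cr B ends (A \<inter> induced_edges E ends B) `` {x}"
proof (intro equalityI subsetI)
  have BV: "B \<subseteq> V" using part_mem_sub[OF P B] .
  fix y assume "y \<in> cr V ends A `` {x}"
  then have "(x, y) \<in> (adj ends A)\<^sup>*" unfolding cr_def by blast
  then have "y \<in> B \<and> (x, y) \<in> (adj ends (A \<inter> induced_edges E ends B))\<^sup>*"
    by (rule path_local[OF P cov B AE _ x])
  then show "y \<in> cr B ends (A \<inter> induced_edges E ends B) `` {x}" unfolding cr_def using x by blast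
next
  have BV: "B \<subseteq> V" using part_mem_sub[OF P B] .
  fix y assume "y \<in> cr B ends (A \<inter> induced_edges E ends B) `` {x}"
  then have y: "y \<in> B" and "(x, y) \<in> (adj ends (A \<inter> induced_edges E ends B))\<^sup>*" unfolding cr_def by auto
  moreover have "(adj ends (A \<inter> induced_edges E ends B))\<^sup>* \<subseteq> (adj ends A)\<^sup>*"
    by (rule rtrancl_mono[OF adj_mono]) blast
  ultimately have "(x, y) \<in> (adj ends A)\<^sup>*" by blast
  then show "y \<in> cr V ends A `` {x}" unfolding cr_def using x y BV by blast
qed

lemma quot_split:
  assumes P: "partition_on V P" and cov: "\<forall>e\<in>A. \<exists>B\<in>P. ends e \<subseteq> B" and AE: "A \<subseteq> E"
  shows "V // cr V ends A = (\<Union>B\<in>P. B // cr B ends (A \<inter> induced_edges E ends B))"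
proof (intro equalityI subsetI)
  fix X assume "X \<in> V // cr V ends A"
  then obtain x where X: "X = cr V ends A `` {x}" and x: "x \<in> V" by (rule quotientE)
  obtain B where B: "B \<in> P" "x \<in> B" using x P unfolding partition_on_def by blast
  have "X = cr B ends (A \<inter> induced_edges E ends B) `` {x}" using X class_local[OF P cov B(1) AE B(2)] by simp
  then have "X \<in> B // cr B ends (A \<inter> induced_edges E ends B)" using B(2) by (simp add: quotientI)
  then show "X \<in> (\<Union>B\<in>P. B // cr B ends (A \<inter> induced_edges E ends B))" using B(1) by blast
next
  fix X assume "X \<in> (\<Union>B\<in>P. B // cr B ends (A \<inter> induced_edges E ends B))"
  then obtain B where B: "B \<in> P" and XB: "X \<in> B // cr B ends (A \<inter> induced_edges E ends B)" by blast
  obtain x where X: "X = cr B ends (A \<inter> induced_edges E ends B) `` {x}" and x: "x \<in> B"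
    using XB by (rule quotientE)
  have "X = cr V ends A `` {x}" using X class_local[OF P cov B AE x] by simp
  moreover have "x \<in> V" using part_mem_sub[OF P B] x by blast
  ultimately show "X \<in> V // cr V ends A" by (simp add: quotientI)
qed

lemma ncomp_split:
  assumes fin: "finite V" and P: "partition_on V P" and cov: "\<forall>e\<in>A. \<exists>B\<in>P. ends e \<subseteq> B" and AE: "A \<subseteq> E"
  shows "ncomp V ends A = (\<Sum>B\<in>P. ncomp B ends (A \<inter> induced_edges E ends B))"
proof -
  have finP: "finite P" using finite_elements[OF fin P] .
  have finB: "\<forall>B\<in>P. finite (B // cr B ends (A \<inter> induced_edges E ends B))"
  proof
    fix B assume "B \<in> P"
    then have "finite B" using part_mem_sub[OF P] fin finite_subset by blast
    then show "finite (B // cr B ends (A \<inter> induced_edges E ends B))" by (rule finite_cr_quot)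
  qed
  have dis: "\<forall>B\<in>P. \<forall>B'\<in>P. B \<noteq> B' \<longrightarrow>
     B // cr B ends (A \<inter> induced_edges E ends B) \<inter> B' // cr B' ends (A \<inter> induced_edges E ends B') = {}"
  proof (intro ballI impI)
    fix B B' assume B: "B \<in> P" and B': "B' \<in> P" and ne: "B \<noteq> B'"
    show "B // cr B ends (A \<inter> induced_edges E ends B) \<inter> B' // cr B' ends (A \<inter> induced_edges E ends B') = {}"
    proof (rule ccontr)
      assume "B // cr B ends (A \<inter> induced_edges E ends B) \<inter> B' // cr B' ends (A \<inter> induced_edges E ends B') \<noteq> {}"
      then obtain X where X1: "X \<in> B // cr B ends (A \<inter> induced_edges E ends B)"
        and X2: "X \<in> B' // cr B' ends (A \<inter> induced_edges E ends B')" by blast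
      have "X \<subseteq> B" by (rule in_quotient_imp_subset[OF equiv_cr X1])
      moreover have "X \<subseteq> B'" by (rule in_quotient_imp_subset[OF equiv_cr X2])
      moreover have "X \<noteq> {}" by (rule in_quotient_imp_non_empty[OF equiv_cr X1])
      ultimately obtain z where "z \<in> B" "z \<in> B'" by blast
      then have "B = B'" using part_uniq[OF P B B'] by blast
      then show False using ne by blast
    qed
  qed
  have "ncomp V ends A = card (\<Union>B\<in>P. B // cr B ends (A \<inter> induced_edges E ends B))"
    unfolding ncomp_cr quot_split[OF P cov AE] ..
  also have "\<dots> = (\<Sum>B\<in>P. card (B // cr B ends (A \<inter> induced_edges E ends B)))"
    by (rule card_UN_disjoint[OF finP finB dis])
  also have "\<dots> = (\<Sum>B\<in>P. ncomp B ends (A \<inter> induced_edges E ends B))" unfolding ncomp_cr ..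
  finally show ?thesis .
qed

lemma cov_iff_refines:
  assumes G: "loopless_graph V E ends" and P: "partition_on V P" and AE: "A \<subseteq> E"
  shows "(\<forall>e\<in>A. \<exists>B\<in>P. ends e \<subseteq> B) \<longleftrightarrow> refines V (V // cr V ends A) P"
proof
  assume cov: "\<forall>e\<in>A. \<exists>B\<in>P. ends e \<subseteq> B"
  have "\<forall>C\<in>V // cr V ends A. \<exists>B\<in>P. C \<subseteq> B"
  proof
    fix C assume "C \<in> V // cr V ends A"
    then obtain x where C: "C = cr V ends A `` {x}" and x: "x \<in> V" by (rule quotientE)
    obtain B where B: "B \<in> P" "x \<in> B" using x P unfolding partition_on_def by blast
    have "C = cr B ends (A \<inter> induced_edges E ends B) `` {x}" using C class_local[OF P cov B(1) AE B(2)] by simp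
    then have "C \<subseteq> B" unfolding cr_def by blast
    then show "\<exists>B\<in>P. C \<subseteq> B" using B(1) by blast
  qed
  then show "refines V (V // cr V ends A) P"
    unfolding refines_unfold using P partition_on_quotient[OF equiv_cr] by blast
next
  assume R: "refines V (V // cr V ends A) P"
  then have cov: "\<forall>C\<in>V // cr V ends A. \<exists>B\<in>P. C \<subseteq> B" unfolding refines_unfold by blast
  show "\<forall>e\<in>A. \<exists>B\<in>P. ends e \<subseteq> B"
  proof
    fix e assume e: "e \<in> A"
    then have eE: "e \<in> E" using AE by blast
    have c2: "card (ends e) = 2" and eV: "ends e \<subseteq> V" using G eE unfolding loopless_graph_def by auto
    obtain x y where xy: "ends e = {x, y}" using c2 card_2_iff by metis
    have xV: "x \<in> V" and yV: "y \<in> V" using eV xy by auto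
    have "(x, y) \<in> adj ends A" unfolding adj_def using e xy by blast
    then have "(x, y) \<in> cr V ends A" unfolding cr_def using xV yV by blast
    moreover have "(x, x) \<in> cr V ends A" unfolding cr_def using xV by blast
    ultimately have sub: "{x, y} \<subseteq> cr V ends A `` {x}" by blast
    have "cr V ends A `` {x} \<in> V // cr V ends A" using xV by (rule quotientI)
    then obtain B where "B \<in> P" "cr V ends A `` {x} \<subseteq> B" using cov by blast
    then show "\<exists>B\<in>P. ends e \<subseteq> B" using sub xy by blast
  qed
qed



lemma EB_disj:
  assumes G: "loopless_graph V E ends" and P: "partition_on V P" and B: "B \<in> P" and B': "B' \<in> P" and ne: "B \<noteq> B'"
  shows "induced_edges E ends B \<inter> induced_edges E ends B' = {}"
proof (rule ccontr)
  assume "induced_edges E ends B \<inter> induced_edges E ends B' \<noteq> {}"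
  then obtain e where e: "e \<in> E" "ends e \<subseteq> B" "ends e \<subseteq> B'" unfolding induced_edges_def by blast
  have "card (ends e) = 2" using G e(1) unfolding loopless_graph_def by blast
  then obtain x y where "ends e = {x, y}" using card_2_iff by metis
  then have "x \<in> B" "x \<in> B'" using e by auto
  then have "B = B'" using part_uniq[OF P B B'] by blast
  then show False using ne by blast
qed

lemma sum_minus_one:
  fixes f :: "'a \<Rightarrow> nat"
  assumes "\<And>x. x \<in> P \<Longrightarrow> 1 \<le> f x"
  shows "(\<Sum>x\<in>P. f x - 1) = (\<Sum>x\<in>P. f x) - card P"
proof -
  have "(\<Sum>x\<in>P. f x - 1) = (\<Sum>x\<in>P. f x) - (\<Sum>x\<in>P. 1)"
    by (rule sum_subtractf_nat) (use assms in blast)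
  also have "(\<Sum>x\<in>P. (1::nat)) = card P" by simp
  finally show ?thesis .
qed

lemma block_term:
  fixes q1 :: "'r::comm_ring_1" and v :: "'e \<Rightarrow> 'r"
  assumes G: "loopless_graph V E ends" and P: "partition_on V P"
    and A: "A \<in> Pow (\<Union>B\<in>P. induced_edges E ends B)"
  shows "(\<Prod>B\<in>P. q1 ^ (ncomp B ends (A \<inter> induced_edges E ends B) - 1) * (\<Prod>e\<in>A \<inter> induced_edges E ends B. v e))
       = q1 ^ (ncomp V ends A - card P) * (\<Prod>e\<in>A. v e)"
proof -
  have finV: "finite V" and finE: "finite E" using G unfolding loopless_graph_def by auto
  have finP: "finite P" using finite_elements[OF finV P] .
  have AE: "A \<subseteq> E" using A unfolding induced_edges_def by blast
  have cov: "\<forall>e\<in>A. \<exists>B\<in>P. ends e \<subseteq> B" using A unfolding induced_edges_def by blast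
  have pos: "\<And>B. B \<in> P \<Longrightarrow> 1 \<le> ncomp B ends (A \<inter> induced_edges E ends B)"
  proof -
    fix B assume B: "B \<in> P"
    have "finite B" using part_mem_sub[OF P B] finV finite_subset by blast
    moreover have "B \<noteq> {}" using part_mem_ne[OF P B] .
    ultimately show "1 \<le> ncomp B ends (A \<inter> induced_edges E ends B)" by (rule ncomp_pos)
  qed
  have "(\<Prod>B\<in>P. q1 ^ (ncomp B ends (A \<inter> induced_edges E ends B) - 1))
      = q1 ^ (\<Sum>B\<in>P. ncomp B ends (A \<inter> induced_edges E ends B) - 1)"
    by (rule power_sum[symmetric])
  also have "(\<Sum>B\<in>P. ncomp B ends (A \<inter> induced_edges E ends B) - 1)
      = (\<Sum>B\<in>P. ncomp B ends (A \<inter> induced_edges E ends B)) - card P"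
    by (rule sum_minus_one[OF pos])
  also have "(\<Sum>B\<in>P. ncomp B ends (A \<inter> induced_edges E ends B)) = ncomp V ends A"
    by (rule ncomp_split[OF finV P cov AE, symmetric])
  finally have p1: "(\<Prod>B\<in>P. q1 ^ (ncomp B ends (A \<inter> induced_edges E ends B) - 1)) = q1 ^ (ncomp V ends A - card P)" .
  have UA: "(\<Union>B\<in>P. A \<inter> induced_edges E ends B) = A" using A by blast
  have finAB: "\<forall>B\<in>P. finite (A \<inter> induced_edges E ends B)" using finite_subset[OF AE finE] by blast
  have disAB: "\<forall>B\<in>P. \<forall>B'\<in>P. B \<noteq> B' \<longrightarrow> (A \<inter> induced_edges E ends B) \<inter> (A \<inter> induced_edges E ends B') = {}"
    using EB_disj[OF G P] by blast
  have "(\<Prod>e\<in>A. v e) = (\<Prod>e\<in>(\<Union>B\<in>P. A \<inter> induced_edges E ends B). v e)" unfolding UA ..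
  also have "\<dots> = (\<Prod>B\<in>P. \<Prod>e\<in>A \<inter> induced_edges E ends B. v e)"
    by (rule prod.UNION_disjoint[OF finP finAB disAB])
  finally have p2: "(\<Prod>B\<in>P. \<Prod>e\<in>A \<inter> induced_edges E ends B. v e) = (\<Prod>e\<in>A. v e)" by simp
  show ?thesis unfolding prod.distrib p1 p2 ..
qed

lemma main_h:
  fixes h :: "nat \<Rightarrow> 'r::comm_ring_1" and q1 :: 'r and v :: "'e \<Rightarrow> 'r"
    and V :: "'a set" and E :: "'e set"
  assumes G: "loopless_graph V E ends"
  shows "(\<Sum>P\<in>{P. partition_on V P}. h (card P) * (\<Prod>B\<in>P. tutteZhat B (induced_edges E ends B) ends q1 v)) =
    (\<Sum>A\<in>Pow E. (\<Prod>e\<in>A. v e) * (\<Sum>P\<in>{P. refines V (V // cr V ends A) P}. h (card P) * q1 ^ (ncomp V ends A - card P)))"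
proof -
  have finV: "finite V" and finE: "finite E" using G unfolding loopless_graph_def by auto
  define T where "T A P = q1 ^ (ncomp V ends A - card P) * (\<Prod>e\<in>A. v e)" for A :: "'e set" and P :: "'a set set"
  define R where "R A P = refines V (V // cr V ends A) P" for A :: "'e set" and P :: "'a set set"
  have finPi: "finite {P. partition_on V P}" by (rule finitely_many_partition_on[OF finV])
  have finPowE: "finite (Pow E)" using finE by simp
  have step1: "(\<Prod>B\<in>P. tutteZhat B (induced_edges E ends B) ends q1 v) =
       (\<Sum>A\<in>Pow E. if R A P then T A P else 0)" if P: "partition_on V P" for P
  proof -
    have finP: "finite P" using finite_elements[OF finV P] .
    have finEB: "\<forall>B\<in>P. finite (induced_edges E ends B)" unfolding induced_edges_def using finE by simp
    have disEB: "\<forall>B\<in>P. \<forall>B'\<in>P. B \<noteq> B' \<longrightarrow> induced_edges E ends B \<inter> induced_edges E ends B' = {}"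
      using EB_disj[OF G P] by blast
    have "(\<Prod>B\<in>P. tutteZhat B (induced_edges E ends B) ends q1 v) =
        (\<Prod>B\<in>P. \<Sum>X\<in>Pow (induced_edges E ends B). q1 ^ (ncomp B ends X - 1) * (\<Prod>e\<in>X. v e))"
      unfolding tutteZhat_def ..
    also have "\<dots> = (\<Sum>A\<in>Pow (\<Union>B\<in>P. induced_edges E ends B). \<Prod>B\<in>P.
          q1 ^ (ncomp B ends (A \<inter> induced_edges E ends B) - 1) * (\<Prod>e\<in>A \<inter> induced_edges E ends B. v e))"
      by (rule prod_sum_Pow[OF finP finEB disEB])
    also have "\<dots> = (\<Sum>A\<in>Pow (\<Union>B\<in>P. induced_edges E ends B). T A P)"
      by (rule sum.cong[OF refl]) (unfold T_def, rule block_term[OF G P])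
    also have "Pow (\<Union>B\<in>P. induced_edges E ends B) = Pow E \<inter> {A. R A P}"
    proof (intro equalityI subsetI)
      fix A assume A: "A \<in> Pow (\<Union>B\<in>P. induced_edges E ends B)"
      then have AE: "A \<subseteq> E" and cov: "\<forall>e\<in>A. \<exists>B\<in>P. ends e \<subseteq> B" unfolding induced_edges_def by blast+
      then have "R A P" unfolding R_def using cov_iff_refines[OF G P AE] by blast
      then show "A \<in> Pow E \<inter> {A. R A P}" using AE by blast
    next
      fix A assume A: "A \<in> Pow E \<inter> {A. R A P}"
      then have AE: "A \<subseteq> E" and "R A P" by auto
      then have cov: "\<forall>e\<in>A. \<exists>B\<in>P. ends e \<subseteq> B" unfolding R_def using cov_iff_refines[OF G P AE] by blast
      show "A \<in> Pow (\<Union>B\<in>P. induced_edges E ends B)" using AE cov unfolding induced_edges_def by blast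
    qed
    also have "(\<Sum>A\<in>Pow E \<inter> {A. R A P}. T A P) = (\<Sum>A\<in>Pow E. if A \<in> {A. R A P} then T A P else 0)"
      by (rule sum.inter_restrict[OF finPowE])
    finally show ?thesis by simp
  qed
  have "(\<Sum>P\<in>{P. partition_on V P}. h (card P) * (\<Prod>B\<in>P. tutteZhat B (induced_edges E ends B) ends q1 v))
      = (\<Sum>P\<in>{P. partition_on V P}. \<Sum>A\<in>Pow E. if R A P then h (card P) * T A P else 0)"
  proof (rule sum.cong[OF refl])
    fix P assume "P \<in> {P. partition_on V P}"
    then have P: "partition_on V P" by simp
    show "h (card P) * (\<Prod>B\<in>P. tutteZhat B (induced_edges E ends B) ends q1 v) =
        (\<Sum>A\<in>Pow E. if R A P then h (card P) * T A P else 0)"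
      unfolding step1[OF P] sum_distrib_left by (rule sum.cong[OF refl]) simp
  qed
  also have "\<dots> = (\<Sum>A\<in>Pow E. \<Sum>P\<in>{P. partition_on V P}. if R A P then h (card P) * T A P else 0)"
    by (rule sum.swap)
  also have "\<dots> = (\<Sum>A\<in>Pow E. (\<Prod>e\<in>A. v e) * (\<Sum>P\<in>{P. R A P}. h (card P) * q1 ^ (ncomp V ends A - card P)))"
  proof (rule sum.cong[OF refl])
    fix A assume "A \<in> Pow E"
    have eq: "{P. partition_on V P} \<inter> {P. R A P} = {P. R A P}" unfolding R_def refines_unfold by blast
    have "(\<Sum>P\<in>{P. partition_on V P}. if R A P then h (card P) * T A P else 0)
        = (\<Sum>P\<in>{P. partition_on V P}. if P \<in> {P. R A P} then h (card P) * T A P else 0)" by simp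
    also have "\<dots> = (\<Sum>P\<in>{P. partition_on V P} \<inter> {P. R A P}. h (card P) * T A P)"
      by (rule sum.inter_restrict[OF finPi, symmetric])
    also have "\<dots> = (\<Sum>P\<in>{P. R A P}. h (card P) * T A P)" unfolding eq ..
    also have "\<dots> = (\<Prod>e\<in>A. v e) * (\<Sum>P\<in>{P. R A P}. h (card P) * q1 ^ (ncomp V ends A - card P))"
      unfolding T_def sum_distrib_left by (rule sum.cong[OF refl]) (simp add: algebra_simps)
    finally show "(\<Sum>P\<in>{P. partition_on V P}. if R A P then h (card P) * T A P else 0)
        = (\<Prod>e\<in>A. v e) * (\<Sum>P\<in>{P. R A P}. h (card P) * q1 ^ (ncomp V ends A - card P))" .
  qed
  finally show ?thesis unfolding R_def .
qed



lemma quot_props: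
  assumes fin: "finite V" and ne: "V \<noteq> {}"
  shows "finite (V // cr V ends A)" "V // cr V ends A \<noteq> {}" "\<forall>C\<in>V // cr V ends A. finite C"
    "partition_on (\<Union>(V // cr V ends A)) (V // cr V ends A)" "\<Union>(V // cr V ends A) = V"
proof -
  show "finite (V // cr V ends A)" by (rule finite_cr_quot[OF fin])
  show "V // cr V ends A \<noteq> {}" using ne by (simp only: quotient_is_empty not_False_eq_True)
  show "\<forall>C\<in>V // cr V ends A. finite C"
  proof
    fix C assume "C \<in> V // cr V ends A"
    then have "C \<subseteq> V" by (rule in_quotient_imp_subset[OF equiv_cr])
    then show "finite C" using fin by (rule finite_subset)
  qed
  show U: "\<Union>(V // cr V ends A) = V" by (rule Union_quotient[OF equiv_cr])
  show "partition_on (\<Union>(V // cr V ends A)) (V // cr V ends A)" unfolding U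
    by (rule partition_on_quotient[OF equiv_cr])
qed

lemma Z_Zhat:
  fixes q :: "'r::comm_ring_1"
  assumes "finite B" "B \<noteq> {}"
  shows "tutteZ B X ends q v = q * tutteZhat B X ends q v"
  unfolding tutteZ_def tutteZhat_def sum_distrib_left
proof (rule sum.cong[OF refl])
  fix A
  have "1 \<le> ncomp B ends A" by (rule ncomp_pos[OF assms])
  then have "q ^ ncomp B ends A = q * q ^ (ncomp B ends A - 1)"
    by (metis Suc_diff_le diff_Suc_1 power_Suc)
  then show "q ^ ncomp B ends A * prod v A = q * (q ^ (ncomp B ends A - 1) * prod v A)" by simp
qed

lemma ffall_mult:
  fixes q1 q2 :: "'r::field"
  assumes "q1 \<noteq> 0"
  shows "ffall (q2 / q1) n * q1 ^ n = (\<Prod>j<n. q2 - of_nat j * q1)"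
proof -
  have "ffall (q2 / q1) n * q1 ^ n = (\<Prod>j<n. (q2 / q1 - of_nat j) * q1)"
    unfolding ffall_def prod.distrib by simp
  also have "\<dots> = (\<Prod>j<n. q2 - of_nat j * q1)"
    by (rule prod.cong[OF refl]) (use assms in \<open>simp add: field_simps\<close>)
  finally show ?thesis .
qed

theorem proposition3p4:
  fixes V :: "'a set" and E :: "'e set" and ends :: "'e \<Rightarrow> 'a set"
    and v :: "'e \<Rightarrow> 'r::field" and q1 q2 :: 'r
  assumes "loopless_graph V E ends" and "V \<noteq> {}"
  shows "(q1 \<noteq> 0 \<longrightarrow>
           tutteZ V E ends q2 v =
           (\<Sum>P\<in>{P. partition_on V P}. ffall (q2 / q1) (card P) *
              (\<Prod>B\<in>P. tutteZ B (induced_edges E ends B) ends q1 v)))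
       \<and> tutteZ V E ends q2 v =
           (\<Sum>P\<in>{P. partition_on V P}. (\<Prod>j<card P. q2 - of_nat j * q1) *
              (\<Prod>B\<in>P. tutteZhat B (induced_edges E ends B) ends q1 v))
       \<and> tutteZhat V E ends q2 v =
           (\<Sum>P\<in>{P. partition_on V P}. (\<Prod>j\<in>{1..<card P}. q2 - of_nat j * q1) *
              (\<Prod>B\<in>P. tutteZhat B (induced_edges E ends B) ends q1 v))"
proof -
  note G = assms(1)
  have finV: "finite V" using G unfolding loopless_graph_def by blast
  note Q = quot_props[OF finV assms(2)]
  have two: "tutteZ V E ends q2 v =
           (\<Sum>P\<in>{P. partition_on V P}. (\<Prod>j<card P. q2 - of_nat j * q1) *
              (\<Prod>B\<in>P. tutteZhat B (induced_edges E ends B) ends q1 v))"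
  proof -
    have "(\<Sum>P\<in>{P. partition_on V P}. (\<Prod>j<card P. q2 - of_nat j * q1) *
              (\<Prod>B\<in>P. tutteZhat B (induced_edges E ends B) ends q1 v)) =
      (\<Sum>A\<in>Pow E. (\<Prod>e\<in>A. v e) * (\<Sum>P\<in>{P. refines V (V // cr V ends A) P}. (\<Prod>j<card P. q2 - of_nat j * q1) * q1 ^ (ncomp V ends A - card P)))"
      by (rule main_h[OF G])
    also have "\<dots> = (\<Sum>A\<in>Pow E. (\<Prod>e\<in>A. v e) * q2 ^ ncomp V ends A)"
    proof (rule sum.cong[OF refl])
      fix A
      have "(\<Sum>P\<in>{P. refines (\<Union>(V // cr V ends A)) (V // cr V ends A) P}. (\<Prod>j<card P. q2 - of_nat j * q1) * q1 ^ (card (V // cr V ends A) - card P)) = q2 ^ card (V // cr V ends A)"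
        by (rule gen_ff[OF Q(1) Q(2) Q(3) Q(4)])
      then show "(\<Prod>e\<in>A. v e) * (\<Sum>P\<in>{P. refines V (V // cr V ends A) P}. (\<Prod>j<card P. q2 - of_nat j * q1) * q1 ^ (ncomp V ends A - card P)) = (\<Prod>e\<in>A. v e) * q2 ^ ncomp V ends A"
        unfolding Q(5) ncomp_cr by simp
    qed
    also have "\<dots> = tutteZ V E ends q2 v" unfolding tutteZ_def by (simp add: mult.commute)
    finally show ?thesis by simp
  qed
  have three: "tutteZhat V E ends q2 v =
           (\<Sum>P\<in>{P. partition_on V P}. (\<Prod>j\<in>{1..<card P}. q2 - of_nat j * q1) *
              (\<Prod>B\<in>P. tutteZhat B (induced_edges E ends B) ends q1 v))"
  proof -
    have "(\<Sum>P\<in>{P. partition_on V P}. (\<Prod>j\<in>{1..<card P}. q2 - of_nat j * q1) *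
              (\<Prod>B\<in>P. tutteZhat B (induced_edges E ends B) ends q1 v)) =
      (\<Sum>A\<in>Pow E. (\<Prod>e\<in>A. v e) * (\<Sum>P\<in>{P. refines V (V // cr V ends A) P}. (\<Prod>j\<in>{1..<card P}. q2 - of_nat j * q1) * q1 ^ (ncomp V ends A - card P)))"
      by (rule main_h[OF G])
    also have "\<dots> = (\<Sum>A\<in>Pow E. (\<Prod>e\<in>A. v e) * q2 ^ (ncomp V ends A - 1))"
    proof (rule sum.cong[OF refl])
      fix A
      have "(\<Sum>P\<in>{P. refines (\<Union>(V // cr V ends A)) (V // cr V ends A) P}. (\<Prod>j\<in>{1..<card P}. q2 - of_nat j * q1) * q1 ^ (card (V // cr V ends A) - card P)) = q2 ^ (card (V // cr V ends A) - 1)"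
        by (rule gen_g[OF Q(1) Q(2) Q(3) Q(4)])
      then show "(\<Prod>e\<in>A. v e) * (\<Sum>P\<in>{P. refines V (V // cr V ends A) P}. (\<Prod>j\<in>{1..<card P}. q2 - of_nat j * q1) * q1 ^ (ncomp V ends A - card P)) = (\<Prod>e\<in>A. v e) * q2 ^ (ncomp V ends A - 1)"
        unfolding Q(5) ncomp_cr by simp
    qed
    also have "\<dots> = tutteZhat V E ends q2 v" unfolding tutteZhat_def by (simp add: mult.commute)
    finally show ?thesis by simp
  qed
  have one: "q1 \<noteq> 0 \<longrightarrow>
           tutteZ V E ends q2 v =
           (\<Sum>P\<in>{P. partition_on V P}. ffall (q2 / q1) (card P) *
              (\<Prod>B\<in>P. tutteZ B (induced_edges E ends B) ends q1 v))"
  proof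
    assume q1: "q1 \<noteq> 0"
    have "(\<Sum>P\<in>{P. partition_on V P}. ffall (q2 / q1) (card P) *
              (\<Prod>B\<in>P. tutteZ B (induced_edges E ends B) ends q1 v)) =
          (\<Sum>P\<in>{P. partition_on V P}. (\<Prod>j<card P. q2 - of_nat j * q1) *
              (\<Prod>B\<in>P. tutteZhat B (induced_edges E ends B) ends q1 v))"
    proof (rule sum.cong[OF refl])
      fix P assume "P \<in> {P. partition_on V P}"
      then have P: "partition_on V P" by simp
      have "(\<Prod>B\<in>P. tutteZ B (induced_edges E ends B) ends q1 v) = (\<Prod>B\<in>P. q1 * tutteZhat B (induced_edges E ends B) ends q1 v)"
      proof (rule prod.cong[OF refl])
        fix B assume B: "B \<in> P"
        have "finite B" using part_mem_sub[OF P B] finV finite_subset by blast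
        then show "tutteZ B (induced_edges E ends B) ends q1 v = q1 * tutteZhat B (induced_edges E ends B) ends q1 v"
          by (rule Z_Zhat[OF _ part_mem_ne[OF P B]])
      qed
      also have "\<dots> = q1 ^ card P * (\<Prod>B\<in>P. tutteZhat B (induced_edges E ends B) ends q1 v)"
        unfolding prod.distrib by simp
      finally have "ffall (q2 / q1) (card P) * (\<Prod>B\<in>P. tutteZ B (induced_edges E ends B) ends q1 v)
          = (ffall (q2 / q1) (card P) * q1 ^ card P) * (\<Prod>B\<in>P. tutteZhat B (induced_edges E ends B) ends q1 v)"
        by (simp add: mult.assoc)
      then show "ffall (q2 / q1) (card P) * (\<Prod>B\<in>P. tutteZ B (induced_edges E ends B) ends q1 v) =
          (\<Prod>j<card P. q2 - of_nat j * q1) * (\<Prod>B\<in>P. tutteZhat B (induced_edges E ends B) ends q1 v)"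
        unfolding ffall_mult[OF q1] .
    qed
    then show "tutteZ V E ends q2 v =
           (\<Sum>P\<in>{P. partition_on V P}. ffall (q2 / q1) (card P) *
              (\<Prod>B\<in>P. tutteZ B (induced_edges E ends B) ends q1 v))" using two by simp
  qed
  show ?thesis using one two three by blast
qed


end
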